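(* Let $\mathbb{M}$ be a depth-1 graded monad on a category $\mathcal{C}$ for which the functor $\overline{M}_1\colon\mathit{EM}(M_0)\to\mathit{EM}(M_0)$ exists. Then for every $\mathcal{C}$-morphism $f\colon X\to M_kY$, one has $\overline{M}_1(f^*_0)=f^*_1$, where $f^*_0\colon(M_0X,\mu^{0,0}_X)\to(M_kY,\mu^{0,k}_Y)$ is viewed as a homomorphism of $M_0$-algebras and $\overline{M}_1(M_0X,\mu^{0,0}_X)=(M_1X,\mu^{0,1}_X)$, $\overline{M}_1(M_kY,\mu^{0,k}_Y)=(M_{k+1}Y,\mu^{0,k+1}_Y)$.
   Context: A graded monad $\mathbb{M}$ on $\mathcal{C}$: functors $M_n$ ($n\in\mathbb{N}$), unit $\eta\colon\mathit{Id}\to M_0$, multiplications $\mu^{n,k}\colon M_nM_k\to M_{n+k}$ with $\mu^{0,n}\eta M_n=\mathit{id}=\mu^{n,0}M_n\eta$ and $\mu^{n+k,m}\mu^{n,k}M_m=\mu^{n,k+m}M_n\mu^{k,m}$. Depth-1: for all $n$, $\mu^{1,n}_X$ is a coequalizer of $\mu^{1,0}M_nX$ and $M_1\mu^{0,n}_X\colon M_1M_0M_nX\to M_1M_nX$. Graded Kleisli star: $f^*_n=\mu^{n,k}_Y\cdot M_nf\colon M_nX\to M_{n+k}Y$. A graded $M_1$-algebra is $(A_0,A_1,a^{0,0},a^{0,1},a^{1,0})$ with $a^{m,k}\colon M_mA_k\to A_{m+k}$ satisfying $a^{0,m}\eta_{A_m}=\mathit{id}$ and $a^{m+r,k}\mu^{m,r}_{A_k}=a^{m,r+k}M_ma^{r,k}$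 whenever defined; homomorphisms are pairs $(f_0,f_1)$ commuting with all structure maps. $M_0$-algebras are Eilenberg–Moore algebras of $(M_0,\eta,\mu^{0,0})$. $\overline{M}_1$ sends an $M_0$-algebra $A$ to $(A_1,a^{0,1})$ where $(A,A_1,\dots)$ is the free graded $M_1$-algebra with $0$-part $A$ (assumed to exist), and sends an $M_0$-homomorphism $h$ to the unique $h_1$ such that $(h,h_1)$ is an $M_1$-homomorphism between the free $M_1$-algebras; for algebras $(M_nX,\mu^{0,n})$ the free $M_1$-algebra is $(M_nX,M_{n+1}X,\mu^{0,n},\mu^{0,n+1},\mu^{1,n})$. *)

theory Defs
  imports Main
begin

record ('o, 'm) category =
  cdom  :: "'m \<Rightarrow> 'o"
  ccod  :: "'m \<Rightarrow> 'o"
  ccomp :: "'m \<Rightarrow> 'm \<Rightarrow> 'm"   (* ccomp C g f = g . f *)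
  cid   :: "'o \<Rightarrow> 'm"

definition hom :: "('o, 'm) category \<Rightarrow> 'o \<Rightarrow> 'o \<Rightarrow> 'm set" where
  "hom C A B = {f. cdom C f = A \<and> ccod C f = B}"

definition is_category :: "('o, 'm) category \<Rightarrow> bool" where
  "is_category C \<longleftrightarrow>
     (\<forall>A. cid C A \<in> hom C A A) \<and>
     (\<forall>f g. ccod C f = cdom C g \<longrightarrow> ccomp C g f \<in> hom C (cdom C f) (ccod C g)) \<and>
     (\<forall>f g h. ccod C f = cdom C g \<and> ccod C g = cdom C h \<longrightarrow>
        ccomp C h (ccomp C g f) = ccomp C (ccomp C h g) f) \<and>
     (\<forall>f. ccomp C f (cid C (cdom C f)) = f \<and> ccomp C (cid C (ccod C f)) f = f)"

definition is_endofunctor :: "('o, 'm) category \<Rightarrow> ('o \<Rightarrow> 'o) \<Rightarrow> ('m \<Rightarrow> 'm) \<Rightarrow> bool" where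
  "is_endofunctor C Fo Fm \<longleftrightarrow>
     (\<forall>f. Fm f \<in> hom C (Fo (cdom C f)) (Fo (ccod C f))) \<and>
     (\<forall>A. Fm (cid C A) = cid C (Fo A)) \<and>
     (\<forall>f g. ccod C f = cdom C g \<longrightarrow> Fm (ccomp C g f) = ccomp C (Fm g) (Fm f))"

definition is_coequalizer :: "('o, 'm) category \<Rightarrow> 'm \<Rightarrow> 'm \<Rightarrow> 'm \<Rightarrow> bool" where
  "is_coequalizer C f g e \<longleftrightarrow>
     cdom C f = cdom C g \<and> ccod C f = ccod C g \<and> cdom C e = ccod C f \<and>
     ccomp C e f = ccomp C e g \<and>
     (\<forall>h. cdom C h = ccod C f \<and> ccomp C h f = ccomp C h g \<longrightarrow>
        (\<exists>!u. u \<in> hom C (ccod C e) (ccod C h) \<and> ccomp C u e = h))"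

record ('o, 'm) gmonad =
  Mo   :: "nat \<Rightarrow> 'o \<Rightarrow> 'o"
  Mm   :: "nat \<Rightarrow> 'm \<Rightarrow> 'm"
  eta  :: "'o \<Rightarrow> 'm"
  mu   :: "nat \<Rightarrow> nat \<Rightarrow> 'o \<Rightarrow> 'm"

definition graded_monad :: "('o, 'm) category \<Rightarrow> ('o, 'm) gmonad \<Rightarrow> bool" where
  "graded_monad C M \<longleftrightarrow>
     is_category C \<and>
     (\<forall>n. is_endofunctor C (Mo M n) (Mm M n)) \<and>
     (\<forall>X. eta M X \<in> hom C X (Mo M 0 X)) \<and>
     (\<forall>f. ccomp C (Mm M 0 f) (eta M (cdom C f)) = ccomp C (eta M (ccod C f)) f) \<and>
     (\<forall>n k X. mu M n k X \<in> hom C (Mo M n (Mo M k X)) (Mo M (n + k) X)) \<and>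
     (\<forall>n k f. ccomp C (Mm M (n + k) f) (mu M n k (cdom C f))
              = ccomp C (mu M n k (ccod C f)) (Mm M n (Mm M k f))) \<and>
     (\<forall>n X. ccomp C (mu M 0 n X) (eta M (Mo M n X)) = cid C (Mo M n X)) \<and>
     (\<forall>n X. ccomp C (mu M n 0 X) (Mm M n (eta M X)) = cid C (Mo M n X)) \<and>
     (\<forall>n k m X. ccomp C (mu M (n + k) m X) (mu M n k (Mo M m X))
              = ccomp C (mu M n (k + m) X) (Mm M n (mu M k m X)))"

definition depth1 :: "('o, 'm) category \<Rightarrow> ('o, 'm) gmonad \<Rightarrow> bool" where
  "depth1 C M \<longleftrightarrow>
     (\<forall>n X. is_coequalizer C (mu M 1 0 (Mo M n X)) (Mm M 1 (mu M 0 n X)) (mu M 1 n X))"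

definition kstar :: "('o, 'm) category \<Rightarrow> ('o, 'm) gmonad \<Rightarrow> nat \<Rightarrow> nat \<Rightarrow> 'o \<Rightarrow> 'm \<Rightarrow> 'm" where
  "kstar C M n k Y f = ccomp C (mu M n k Y) (Mm M n f)"

definition is_M0_alg :: "('o, 'm) category \<Rightarrow> ('o, 'm) gmonad \<Rightarrow> 'o \<Rightarrow> 'm \<Rightarrow> bool" where
  "is_M0_alg C M A a \<longleftrightarrow>
     a \<in> hom C (Mo M 0 A) A \<and>
     ccomp C a (eta M A) = cid C A \<and>
     ccomp C a (mu M 0 0 A) = ccomp C a (Mm M 0 a)"

definition is_M0_hom :: "('o, 'm) category \<Rightarrow> ('o, 'm) gmonad \<Rightarrow> 'o \<times> 'm \<Rightarrow> 'o \<times> 'm \<Rightarrow> 'm \<Rightarrow> bool" where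
  "is_M0_hom C M Aa Bb h \<longleftrightarrow>
     h \<in> hom C (fst Aa) (fst Bb) \<and>
     ccomp C h (snd Aa) = ccomp C (snd Bb) (Mm M 0 h)"

text \<open>A graded M_1-algebra (A_0, A_1, a^{0,0}, a^{0,1}, a^{1,0}).\<close>
type_synonym ('o, 'm) m1alg = "'o \<times> 'o \<times> 'm \<times> 'm \<times> 'm"

definition is_M1_alg :: "('o, 'm) category \<Rightarrow> ('o, 'm) gmonad \<Rightarrow> ('o, 'm) m1alg \<Rightarrow> bool" where
  "is_M1_alg C M A \<longleftrightarrow> (case A of (A0, A1, a00, a01, a10) \<Rightarrow>
     a00 \<in> hom C (Mo M 0 A0) A0 \<and>
     a01 \<in> hom C (Mo M 0 A1) A1 \<and>
     a10 \<in> hom C (Mo M 1 A0) A1 \<and>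
     ccomp C a00 (eta M A0) = cid C A0 \<and>
     ccomp C a01 (eta M A1) = cid C A1 \<and>
     \<comment> \<open>(m,r,k) = (0,0,0)\<close>
     ccomp C a00 (mu M 0 0 A0) = ccomp C a00 (Mm M 0 a00) \<and>
     \<comment> \<open>(m,r,k) = (0,0,1)\<close>
     ccomp C a01 (mu M 0 0 A1) = ccomp C a01 (Mm M 0 a01) \<and>
     \<comment> \<open>(m,r,k) = (1,0,0)\<close>
     ccomp C a10 (mu M 1 0 A0) = ccomp C a10 (Mm M 1 a00) \<and>
     \<comment> \<open>(m,r,k) = (0,1,0)\<close>
     ccomp C a10 (mu M 0 1 A0) = ccomp C a01 (Mm M 0 a10))"

definition is_M1_hom :: "('o, 'm) category \<Rightarrow> ('o, 'm) gmonad \<Rightarrow> ('o, 'm) m1alg \<Rightarrow> ('o, 'm) m1alg \<Rightarrow> 'm \<Rightarrow> 'm \<Rightarrow> bool" where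
  "is_M1_hom C M A B f0 f1 \<longleftrightarrow> (case A of (A0, A1, a00, a01, a10) \<Rightarrow> case B of (B0, B1, b00, b01, b10) \<Rightarrow>
     f0 \<in> hom C A0 B0 \<and> f1 \<in> hom C A1 B1 \<and>
     ccomp C f0 a00 = ccomp C b00 (Mm M 0 f0) \<and>
     ccomp C f1 a01 = ccomp C b01 (Mm M 0 f1) \<and>
     ccomp C f1 a10 = ccomp C b10 (Mm M 1 f0))"

definition is_free_M1_alg :: "('o, 'm) category \<Rightarrow> ('o, 'm) gmonad \<Rightarrow> ('o, 'm) m1alg \<Rightarrow> bool" where
  "is_free_M1_alg C M A \<longleftrightarrow> is_M1_alg C M A \<and>
     (\<forall>B. is_M1_alg C M B \<longrightarrow>
        (\<forall>h. is_M0_hom C M (fst A, fst (snd (snd A))) (fst B, fst (snd (snd B))) h \<longrightarrow>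
           (\<exists>!h1. is_M1_hom C M A B h h1)))"

text \<open>The functor Mbar_1 exists: every M_0-algebra has a free graded M_1-algebra with that 0-part.\<close>
definition Mbar1_exists :: "('o, 'm) category \<Rightarrow> ('o, 'm) gmonad \<Rightarrow> bool" where
  "Mbar1_exists C M \<longleftrightarrow>
     (\<forall>A a. is_M0_alg C M A a \<longrightarrow> (\<exists>A1 a01 a10. is_free_M1_alg C M (A, A1, a, a01, a10)))"

text \<open>The free graded M_1-algebra on (M_n X, mu^{0,n}_X):
  (M_n X, M_{n+1} X, mu^{0,n}, mu^{0,n+1}, mu^{1,n}).\<close>
definition freeM1 :: "('o, 'm) gmonad \<Rightarrow> 'o \<Rightarrow> nat \<Rightarrow> ('o, 'm) m1alg" where
  "freeM1 M X n = (Mo M n X, Mo M (Suc n) X, mu M 0 n X, mu M 0 (Suc n) X, mu M 1 n X)"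

text \<open>Action of Mbar_1 on an M_0-homomorphism h between (the 0-parts of) free M_1-algebras A, B:
  the unique h_1 such that (h, h_1) is an M_1-homomorphism.\<close>
definition Mbar1_hom :: "('o, 'm) category \<Rightarrow> ('o, 'm) gmonad \<Rightarrow> ('o, 'm) m1alg \<Rightarrow> ('o, 'm) m1alg \<Rightarrow> 'm \<Rightarrow> 'm" where
  "Mbar1_hom C M A B h = (THE h1. is_M1_hom C M A B h h1)"

end

theory Submission
  imports Defs
begin

context
  fixes C :: "('o, 'm) category" and M :: "('o, 'm) gmonad"
  assumes gm: "graded_monad C M"
begin

lemma cat: "is_category C" using gm by (simp add: graded_monad_def)

lemma comp_dom[simp]: "ccod C f = cdom C g \<Longrightarrow> cdom C (ccomp C g f) = cdom C f"
  using cat unfolding is_category_def hom_def by blast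
lemma comp_cod[simp]: "ccod C f = cdom C g \<Longrightarrow> ccod C (ccomp C g f) = ccod C g"
  using cat unfolding is_category_def hom_def by blast
lemma assoc: "ccod C f = cdom C g \<Longrightarrow> ccod C g = cdom C h \<Longrightarrow>
        ccomp C h (ccomp C g f) = ccomp C (ccomp C h g) f"
  using cat unfolding is_category_def by blast
lemma id_dom[simp]: "cdom C (cid C A) = A" and id_cod[simp]: "ccod C (cid C A) = A"
  using cat unfolding is_category_def hom_def by auto
lemma id_l: "ccomp C (cid C (ccod C f)) f = f" and id_r: "ccomp C f (cid C (cdom C f)) = f"
  using cat unfolding is_category_def by auto

lemma Mm_dom[simp]: "cdom C (Mm M n f) = Mo M n (cdom C f)"
  and Mm_cod[simp]: "ccod C (Mm M n f) = Mo M n (ccod C f)"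
  using gm unfolding graded_monad_def is_endofunctor_def hom_def by auto
lemma Mm_comp: "ccod C f = cdom C g \<Longrightarrow> Mm M n (ccomp C g f) = ccomp C (Mm M n g) (Mm M n f)"
  using gm unfolding graded_monad_def is_endofunctor_def by auto
lemma mu_dom[simp]: "cdom C (mu M n k X) = Mo M n (Mo M k X)"
  and mu_cod[simp]: "ccod C (mu M n k X) = Mo M (n+k) X"
  using gm unfolding graded_monad_def hom_def by auto
lemma eta_dom[simp]: "cdom C (eta M X) = X" and eta_cod[simp]: "ccod C (eta M X) = Mo M 0 X"
  using gm unfolding graded_monad_def hom_def by auto
lemma mu_nat: "ccomp C (Mm M (n + k) f) (mu M n k (cdom C f))
              = ccomp C (mu M n k (ccod C f)) (Mm M n (Mm M k f))"
  using gm unfolding graded_monad_def by blast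
lemma mu_unit_r: "ccomp C (mu M n 0 X) (Mm M n (eta M X)) = cid C (Mo M n X)"
  using gm unfolding graded_monad_def by blast
lemma mu_assoc: "ccomp C (mu M (n + k) m X) (mu M n k (Mo M m X))
              = ccomp C (mu M n (k + m) X) (Mm M n (mu M k m X))"
  using gm unfolding graded_monad_def by blast

end

theorem lemma5:
  fixes C :: "('o, 'm) category" and M :: "('o, 'm) gmonad"
    and X Y :: 'o and k :: nat and f :: 'm
  assumes "graded_monad C M"
    and "depth1 C M"
    and "Mbar1_exists C M"
    and "f \<in> hom C X (Mo M k Y)"
  shows "Mbar1_hom C M (freeM1 M X 0) (freeM1 M Y k) (kstar C M 0 k Y f) = kstar C M 1 k Y f"
proof -
  note gm = assms(1)
  have fd[simp]: "cdom C f = X" and fc[simp]: "ccod C f = Mo M k Y" using assms(4) by (auto simp: hom_def)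
  define f0 where "f0 = kstar C M 0 k Y f"
  define f1 where "f1 = kstar C M 1 k Y f"
  have f0d[simp]: "cdom C f0 = Mo M 0 X" and f0c[simp]: "ccod C f0 = Mo M k Y"
    unfolding f0_def kstar_def using gm by simp_all
  have f1d[simp]: "cdom C f1 = Mo M 1 X" and f1c[simp]: "ccod C f1 = Mo M (Suc k) Y"
    unfolding f1_def kstar_def using gm by simp_all
  have e0: "ccomp C f0 (mu M 0 0 X) = ccomp C (mu M 0 k Y) (Mm M 0 f0)"
  proof -
    have "ccomp C f0 (mu M 0 0 X) = ccomp C (mu M 0 k Y) (ccomp C (Mm M 0 f) (mu M 0 0 X))"
      unfolding f0_def kstar_def using gm by (simp add: assoc)
    also have "ccomp C (Mm M 0 f) (mu M 0 0 X) = ccomp C (mu M 0 0 (Mo M k Y)) (Mm M 0 (Mm M 0 f))"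
      using mu_nat[OF gm, of 0 0 f] by simp
    also have "ccomp C (mu M 0 k Y) (ccomp C (mu M 0 0 (Mo M k Y)) (Mm M 0 (Mm M 0 f)))
       = ccomp C (ccomp C (mu M 0 k Y) (mu M 0 0 (Mo M k Y))) (Mm M 0 (Mm M 0 f))"
      using gm by (simp add: assoc)
    also have "ccomp C (mu M 0 k Y) (mu M 0 0 (Mo M k Y)) = ccomp C (mu M 0 k Y) (Mm M 0 (mu M 0 k Y))"
      using mu_assoc[OF gm, of 0 0 k Y] by simp
    also have "ccomp C (ccomp C (mu M 0 k Y) (Mm M 0 (mu M 0 k Y))) (Mm M 0 (Mm M 0 f))
       = ccomp C (mu M 0 k Y) (Mm M 0 f0)"
      unfolding f0_def kstar_def using gm by (simp add: assoc Mm_comp)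
    finally show ?thesis .
  qed
  have e1: "ccomp C f1 (mu M 0 1 X) = ccomp C (mu M 0 (Suc k) Y) (Mm M 0 f1)"
  proof -
    have "ccomp C f1 (mu M 0 1 X) = ccomp C (mu M 1 k Y) (ccomp C (Mm M 1 f) (mu M 0 1 X))"
      unfolding f1_def kstar_def using gm by (simp add: assoc)
    also have "ccomp C (Mm M 1 f) (mu M 0 1 X) = ccomp C (mu M 0 1 (Mo M k Y)) (Mm M 0 (Mm M 1 f))"
      using mu_nat[OF gm, of 0 1 f] by simp
    also have "ccomp C (mu M 1 k Y) (ccomp C (mu M 0 1 (Mo M k Y)) (Mm M 0 (Mm M 1 f)))
       = ccomp C (ccomp C (mu M 1 k Y) (mu M 0 1 (Mo M k Y))) (Mm M 0 (Mm M 1 f))"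
      using gm by (simp add: assoc)
    also have "ccomp C (mu M 1 k Y) (mu M 0 1 (Mo M k Y)) = ccomp C (mu M 0 (Suc k) Y) (Mm M 0 (mu M 1 k Y))"
      using mu_assoc[OF gm, of 0 1 k Y] by simp
    also have "ccomp C (ccomp C (mu M 0 (Suc k) Y) (Mm M 0 (mu M 1 k Y))) (Mm M 0 (Mm M 1 f))
       = ccomp C (mu M 0 (Suc k) Y) (Mm M 0 f1)"
      unfolding f1_def kstar_def using gm by (simp add: assoc Mm_comp)
    finally show ?thesis .
  qed
  have e2: "ccomp C f1 (mu M 1 0 X) = ccomp C (mu M 1 k Y) (Mm M 1 f0)"
  proof -
    have "ccomp C f1 (mu M 1 0 X) = ccomp C (mu M 1 k Y) (ccomp C (Mm M 1 f) (mu M 1 0 X))"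
      unfolding f1_def kstar_def using gm by (simp add: assoc)
    also have "ccomp C (Mm M 1 f) (mu M 1 0 X) = ccomp C (mu M 1 0 (Mo M k Y)) (Mm M 1 (Mm M 0 f))"
      using mu_nat[OF gm, of 1 0 f] by simp
    also have "ccomp C (mu M 1 k Y) (ccomp C (mu M 1 0 (Mo M k Y)) (Mm M 1 (Mm M 0 f)))
       = ccomp C (ccomp C (mu M 1 k Y) (mu M 1 0 (Mo M k Y))) (Mm M 1 (Mm M 0 f))"
      using gm by (simp add: assoc)
    also have "ccomp C (mu M 1 k Y) (mu M 1 0 (Mo M k Y)) = ccomp C (mu M 1 k Y) (Mm M 1 (mu M 0 k Y))"
      using mu_assoc[OF gm, of 1 0 k Y] by simp
    also have "ccomp C (ccomp C (mu M 1 k Y) (Mm M 1 (mu M 0 k Y))) (Mm M 1 (Mm M 0 f))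
       = ccomp C (mu M 1 k Y) (Mm M 1 f0)"
      unfolding f0_def kstar_def using gm by (simp add: assoc Mm_comp)
    finally show ?thesis .
  qed
  have hom1: "is_M1_hom C M (freeM1 M X 0) (freeM1 M Y k) f0 f1"
    unfolding is_M1_hom_def freeM1_def using e0 e1 e2 by (simp add: hom_def)
  have uniq: "h = f1" if h: "is_M1_hom C M (freeM1 M X 0) (freeM1 M Y k) f0 h" for h
  proof -
    from h have hd: "cdom C h = Mo M 1 X" and he: "ccomp C h (mu M 1 0 X) = ccomp C (mu M 1 k Y) (Mm M 1 f0)"
      unfolding is_M1_hom_def freeM1_def by (auto simp: hom_def)
    have "h = ccomp C h (ccomp C (mu M 1 0 X) (Mm M 1 (eta M X)))"
      using mu_unit_r[OF gm, of 1 X] id_r[OF gm, of h] hd by simp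
    also have "\<dots> = ccomp C (ccomp C h (mu M 1 0 X)) (Mm M 1 (eta M X))"
      using gm hd by (simp add: assoc)
    finally have hh: "h = ccomp C (ccomp C (mu M 1 k Y) (Mm M 1 f0)) (Mm M 1 (eta M X))" using he by simp
    have "f1 = ccomp C f1 (ccomp C (mu M 1 0 X) (Mm M 1 (eta M X)))"
      using mu_unit_r[OF gm, of 1 X] id_r[OF gm, of f1] by simp
    also have "\<dots> = ccomp C (ccomp C f1 (mu M 1 0 X)) (Mm M 1 (eta M X))"
      using gm by (simp add: assoc)
    finally have "f1 = ccomp C (ccomp C (mu M 1 k Y) (Mm M 1 f0)) (Mm M 1 (eta M X))" using e2 by simp
    with hh show ?thesis by simp
  qed
  have "Mbar1_hom C M (freeM1 M X 0) (freeM1 M Y k) f0 = f1"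
    unfolding Mbar1_hom_def using hom1 uniq by (rule the_equality)
  then show ?thesis unfolding f0_def f1_def .
qed

end
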